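(* Let $f\in H^2(\mathbb{D})$. Then $|\langle f,e_{n,a}\rangle|\to 0$ as $n\to\infty$, uniformly in $a\in\mathbb{D}$; that is, for every $\varepsilon>0$ there is $N$ such that $|\langle f,e_{n,a}\rangle|<\varepsilon$ for all $n>N$ and all $a\in\mathbb{D}$.
   Context: $\mathbb{D}$ is the open unit disc; $H^2(\mathbb{D})$ the Hardy space with inner product $\langle f,g\rangle=\frac{1}{2\pi}\int_0^{2\pi}f(e^{it})\overline{g(e^{it})}\,dt$. For $n\in\mathbb{N}$ and $a\in\mathbb{D}$, $k_{n,a}(z)=\left(\frac{\partial}{\partial\overline{a}}\right)^n\frac{1}{1-\overline{a}z}=\frac{n!\,z^n}{(1-\overline{a}z)^{n+1}}$ and $e_{n,a}=k_{n,a}/\|k_{n,a}\|$. *)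

theory Defs
  imports "HOL-Analysis.Analysis"
begin

definition in_H2 :: "(complex \<Rightarrow> complex) \<Rightarrow> bool" where
  "in_H2 f \<longleftrightarrow> f holomorphic_on ball 0 1 \<and>
     (\<exists>B. \<forall>r\<in>{0<..<1}.
        integral {0..2*pi} (\<lambda>t. (cmod (f (of_real r * cis t)))\<^sup>2) / (2*pi) \<le> B)"

text \<open>The H^2 inner product: the boundary integral, realised as the limit of the
integrals over circles of radius r as r tends to 1 from below.\<close>
definition h2_inner :: "(complex \<Rightarrow> complex) \<Rightarrow> (complex \<Rightarrow> complex) \<Rightarrow> complex" where
  "h2_inner f g = Lim (at_left 1)
     (\<lambda>r::real. integral {0..2*pi} (\<lambda>t. f (of_real r * cis t) * cnj (g (of_real r * cis t)))
                 / of_real (2*pi))"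

definition h2_norm :: "(complex \<Rightarrow> complex) \<Rightarrow> real" where
  "h2_norm f = sqrt (Re (h2_inner f f))"

definition kern :: "nat \<Rightarrow> complex \<Rightarrow> complex \<Rightarrow> complex" where
  "kern n a z = of_nat (fact n) * z ^ n / (1 - cnj a * z) ^ (n + 1)"

definition ekern :: "nat \<Rightarrow> complex \<Rightarrow> complex \<Rightarrow> complex" where
  "ekern n a z = kern n a z / of_real (h2_norm (kern n a))"

end

theory Submission imports Defs "HOL-Complex_Analysis.Complex_Analysis" begin

lemma cis_int_zero:
  fixes m :: int assumes "m \<noteq> 0"
  shows "((\<lambda>t. cis (of_int m * t)) has_integral 0) {0..2*pi}"
proof -
  define a where "a = \<i> * of_int m"
  have a0: "a \<noteq> 0" using assms by (simp add: a_def)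
  have "\<And>t. t \<in> {0..2*pi} \<Longrightarrow> ((\<lambda>x. exp (a * x) / a) has_vector_derivative exp (a * t)) (at t within {0..2*pi})"
    using a0
    by (intro derivative_eq_intros has_complex_derivative_imp_has_vector_derivative [unfolded o_def] | simp)+
  then have "((\<lambda>t. exp(a * of_real t)) has_integral exp(a * complex_of_real (2*pi))/a - exp(a * of_real 0)/a)  {0..2*pi}"
    by (meson fundamental_theorem_of_calculus pi_ge_zero mult_nonneg_nonneg zero_le_numeral)
  moreover have "exp(a * complex_of_real (2*pi)) = 1"
    unfolding a_def using cis_multiple_2pi[of "of_int m"]
    by (simp add: cis_conv_exp mult_ac)
  moreover have "exp (a * of_real t) = cis (of_int m * t)" for t
    by (simp add: a_def cis_conv_exp mult_ac)
  ultimately show ?thesis by simp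
qed

lemma cis_orth:
  fixes j k :: nat
  shows "((\<lambda>t. cis t ^ j * cnj (cis t) ^ k) has_integral (if j = k then 2*pi else 0)) {0..2*pi}"
proof -
  have e: "cis t ^ j * cnj (cis t) ^ k = cis (of_int (int j - int k) * t)" for t
    by (simp only: Complex.DeMoivre cis_cnj cis_mult) (simp add: algebra_simps)
  show ?thesis
  proof (cases "j = k")
    case True
    then show ?thesis unfolding e using has_integral_const_real[of "1::complex" 0 "2*pi"]
      by (simp add: scaleR_conv_of_real)
  next
    case False
    then have "int j - int k \<noteq> 0" by simp
    from cis_int_zero[OF this] False show ?thesis unfolding e by simp
  qed
qed

lemma termwise:
  fixes F :: "nat \<Rightarrow> real \<Rightarrow> complex"
  assumes M: "\<And>j t. t \<in> {0..2*pi} \<Longrightarrow> norm (F j t) \<le> M j" and sM: "summable M"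
    and C: "\<And>j. continuous_on {0..2*pi} (F j)"
    and I: "\<And>j. (F j has_integral I j) {0..2*pi}"
  shows "I sums (integral {0..2*pi} (\<lambda>t. \<Sum>j. F j t))"
    and "(\<lambda>t. \<Sum>j. F j t) integrable_on {0..2*pi}"
    and "continuous_on {0..2*pi} (\<lambda>t. \<Sum>j. F j t)"
proof -
  have U: "uniform_limit {0..2*pi} (\<lambda>n t. \<Sum>i<n. F i t) (\<lambda>t. \<Sum>j. F j t) sequentially"
    by (rule Weierstrass_m_test) (use M sM in auto)
  have CC: "\<And>n. continuous_on {0..2*pi} (\<lambda>t. \<Sum>i<n. F i t)"
    by (intro continuous_on_sum C)
  show cont: "continuous_on {0..2*pi} (\<lambda>t. \<Sum>j. F j t)"
    by (rule uniform_limit_theorem[OF _ U]) (use CC in auto)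
  then show "(\<lambda>t. \<Sum>j. F j t) integrable_on {0..2*pi}"
    by (rule integrable_continuous_real)
  obtain Ii J where 1: "\<And>n. ((\<lambda>t. \<Sum>i<n. F i t) has_integral Ii n) {0..2*pi}"
    and 2: "((\<lambda>t. \<Sum>j. F j t) has_integral J) {0..2*pi}" and 3: "Ii \<longlonglongrightarrow> J"
    using uniform_limit_integral[OF U CC] by auto
  have "Ii n = (\<Sum>i<n. I i)" for n
  proof -
    have "((\<lambda>t. \<Sum>i<n. F i t) has_integral (\<Sum>i<n. I i)) {0..2*pi}"
      by (intro has_integral_sum I) auto
    then show ?thesis using 1 has_integral_unique by blast
  qed
  then have "Ii = (\<lambda>n. \<Sum>i<n. I i)" by auto
  with 3 have "I sums J" unfolding sums_def by simp
  then show "I sums (integral {0..2*pi} (\<lambda>t. \<Sum>j. F j t))"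
    using 2 integral_unique by blast
qed


lemma abs_summable_inside:
  fixes c :: "nat \<Rightarrow> complex" and g :: "complex \<Rightarrow> complex"
  assumes g: "\<And>z. z \<in> ball 0 1 \<Longrightarrow> (\<lambda>k. c k * z^k) sums g z"
    and r: "0 \<le> r" "r < 1"
  shows "summable (\<lambda>k. norm (c k) * r^k)"
proof -
  define s where "s = (1 + r) / 2"
  have "norm (of_real s :: complex) < 1" unfolding norm_of_real using r by (simp add: s_def)
  then have "of_real s \<in> ball (0::complex) 1" by simp
  then have "summable (\<lambda>k. c k * (of_real s)^k)" using g sums_summable by blast
  moreover have "norm (of_real r :: complex) < norm (of_real s :: complex)"
    unfolding norm_of_real using r by (simp add: s_def)
  ultimately have "summable (\<lambda>n. norm (c n * (of_real r :: complex) ^ n))" by (rule powser_insidea)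
  then show ?thesis using r by (simp add: norm_mult norm_power)
qed

lemma parseval:
  fixes c d :: "nat \<Rightarrow> complex" and g h :: "complex \<Rightarrow> complex" and r :: real
  assumes g: "\<And>z. z \<in> ball 0 1 \<Longrightarrow> (\<lambda>k. c k * z^k) sums g z"
      and h: "\<And>z. z \<in> ball 0 1 \<Longrightarrow> (\<lambda>k. d k * z^k) sums h z"
      and r: "0 \<le> r" "r < 1"
  shows "(\<lambda>m. c m * cnj (d m) * of_real (r ^ (2*m))) sums
     (integral {0..2*pi} (\<lambda>t. g (of_real r * cis t) * cnj (h (of_real r * cis t))) / of_real (2*pi))"
proof -
  define z where "z t = of_real r * cis t" for t
  have nz: "norm (z t) = r" for t using r by (simp add: z_def norm_mult)
  have zb: "z t \<in> ball 0 1" for t using nz r by simp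
  have sc: "summable (\<lambda>k. norm (c k) * r^k)" by (rule abs_summable_inside[OF g r])
  have sd: "summable (\<lambda>k. norm (d k) * r^k)" by (rule abs_summable_inside[OF h r])
  define Bg where "Bg = (\<Sum>k. norm (c k) * r^k)"
  have gb: "norm (g (z t)) \<le> Bg" for t
  proof -
    have "g (z t) = (\<Sum>k. c k * z t ^ k)" using g[OF zb] sums_unique by blast
    also have "norm \<dots> \<le> (\<Sum>k. norm (c k * z t ^ k))"
      by (rule summable_norm) (use sc in \<open>simp add: norm_mult norm_power nz\<close>)
    also have "\<dots> = Bg" by (simp add: Bg_def norm_mult norm_power nz)
    finally show ?thesis .
  qed
  have A: "((\<lambda>t. g (z t) * cnj (z t) ^ k) has_integral (c k * of_real (r^(2*k)) * (2*pi))) {0..2*pi}"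
    and Ac: "continuous_on {0..2*pi} (\<lambda>t. g (z t) * cnj (z t) ^ k)" for k
  proof -
    define F where "F j t = c j * z t ^ j * cnj (z t) ^ k" for j t
    define I where "I j = c j * of_real (r^(j+k)) * (if j = k then 2*pi else 0)" for j
    have FM: "norm (F j t) \<le> norm (c j) * r^j * r^k" for j t
      by (simp add: F_def norm_mult norm_power nz)
    have sM: "summable (\<lambda>j. norm (c j) * r^j * r^k)" by (intro summable_mult2 sc)
    have FC: "continuous_on {0..2*pi} (F j)" for j
      unfolding F_def z_def by (intro continuous_intros)
    have FI: "(F j has_integral I j) {0..2*pi}" for j
    proof -
      have "F j t = (c j * of_real (r^(j+k))) * (cis t ^ j * cnj (cis t) ^ k)" for t
        by (simp add: F_def z_def power_mult_distrib power_add)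
      then have e: "F j = (\<lambda>t. (c j * of_real (r^(j+k))) * (cis t ^ j * cnj (cis t) ^ k))" by auto
      show ?thesis unfolding e I_def
        by (intro has_integral_mult_right) (use cis_orth[of j k] in simp)
    qed
    have sumF: "(\<lambda>t. \<Sum>j. F j t) = (\<lambda>t. g (z t) * cnj (z t) ^ k)"
    proof
      fix t
      have "(\<lambda>j. c j * z t ^ j * cnj (z t) ^ k) sums (g (z t) * cnj (z t) ^ k)"
        by (rule sums_mult2) (rule g[OF zb])
      then show "(\<Sum>j. F j t) = g (z t) * cnj (z t) ^ k" unfolding F_def by (rule sums_unique[symmetric])
    qed
    note T = termwise[OF FM sM FC FI, unfolded sumF]
    have "(\<lambda>j. if j = k then I j else 0) = I" by (auto simp: I_def)
    with sums_single[of k I] have "I sums (I k)" by simp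
    then have "integral {0..2*pi} (\<lambda>t. g (z t) * cnj (z t) ^ k) = I k"
      using T(1) sums_unique2 by blast
    then show "((\<lambda>t. g (z t) * cnj (z t) ^ k) has_integral (c k * of_real (r^(2*k)) * (2*pi))) {0..2*pi}"
    proof -
      have "r^(2*k) = r^(k+k)" by (simp add: mult_2)
      then have "I k = c k * of_real (r^(2*k)) * (2*pi)" by (simp add: I_def)
      moreover from T(2) have "((\<lambda>t. g (z t) * cnj (z t) ^ k) has_integral integral {0..2*pi} (\<lambda>t. g (z t) * cnj (z t) ^ k)) {0..2*pi}"
        by (rule integrable_integral)
      ultimately show ?thesis using \<open>integral {0..2*pi} (\<lambda>t. g (z t) * cnj (z t) ^ k) = I k\<close> by simp
    qed
    show "continuous_on {0..2*pi} (\<lambda>t. g (z t) * cnj (z t) ^ k)" by (rule T(3))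
  qed
  have gc: "continuous_on {0..2*pi} (\<lambda>t. g (z t))" using Ac[of 0] by simp
  define F where "F k t = g (z t) * cnj (z t) ^ k * cnj (d k)" for k t
  define I where "I k = c k * of_real (r^(2*k)) * (2*pi) * cnj (d k)" for k
  have FM: "norm (F k t) \<le> Bg * (norm (d k) * r^k)" for k t
  proof -
    have "norm (F k t) = norm (g (z t)) * (norm (d k) * r^k)"
      by (simp add: F_def norm_mult norm_power nz)
    also have "\<dots> \<le> Bg * (norm (d k) * r^k)"
      by (intro mult_right_mono gb) (use r in auto)
    finally show ?thesis .
  qed
  have sM: "summable (\<lambda>k. Bg * (norm (d k) * r^k))" by (intro summable_mult sd)
  have FC: "continuous_on {0..2*pi} (F k)" for k
    unfolding F_def using gc unfolding z_def by (intro continuous_intros)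
  have FI: "(F k has_integral I k) {0..2*pi}" for k
    unfolding F_def I_def by (intro has_integral_mult_left A)
  have sumF: "(\<lambda>t. \<Sum>k. F k t) = (\<lambda>t. g (z t) * cnj (h (z t)))"
  proof
    fix t
    have "(\<lambda>k. cnj (d k * z t ^ k)) sums cnj (h (z t))"
      unfolding sums_cnj by (rule h[OF zb])
    then have "(\<lambda>k. g (z t) * cnj (d k * z t ^ k)) sums (g (z t) * cnj (h (z t)))"
      by (rule sums_mult)
    moreover have "g (z t) * cnj (d k * z t ^ k) = F k t" for k
      by (simp add: F_def)
    ultimately have "(\<lambda>k. F k t) sums (g (z t) * cnj (h (z t)))" by simp
    then show "(\<Sum>k. F k t) = g (z t) * cnj (h (z t))"
      by (rule sums_unique[symmetric])
  qed
  note T = termwise[OF FM sM FC FI, unfolded sumF]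
  from sums_divide[OF T(1), of "of_real (2*pi)"]
  moreover have "I m / of_real (2*pi) = c m * cnj (d m) * of_real (r ^ (2*m))" for m
    by (simp add: I_def)
  ultimately show ?thesis unfolding z_def by simp
qed


lemma inner_lim:
  fixes c d :: "nat \<Rightarrow> complex" and g h :: "complex \<Rightarrow> complex"
  assumes g: "\<And>z. z \<in> ball 0 1 \<Longrightarrow> (\<lambda>k. c k * z^k) sums g z"
      and h: "\<And>z. z \<in> ball 0 1 \<Longrightarrow> (\<lambda>k. d k * z^k) sums h z"
      and sc: "summable (\<lambda>k. norm (c k)^2)" and sd: "summable (\<lambda>k. norm (d k)^2)"
  shows "h2_inner g h = (\<Sum>m. c m * cnj (d m))"
proof -
  define a where "a m = c m * cnj (d m)" for m
  have na: "norm (a m) \<le> (norm (c m)^2 + norm (d m)^2) / 2" for m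
  proof -
    have "0 \<le> (norm (c m) - norm (d m))^2" by simp
    then show ?thesis by (simp add: a_def norm_mult power2_eq_square algebra_simps)
  qed
  have sa: "summable (\<lambda>m. norm (a m))"
  proof (rule summable_comparison_test[OF _ summable_divide[OF summable_add[OF sc sd], of 2]])
    show "\<exists>N. \<forall>n\<ge>N. norm (norm (a n)) \<le> (norm (c n)^2 + norm (d n)^2) / 2"
      using na by auto
  qed
  define S where "S r = (\<Sum>m. a m * of_real (r^(2*m)))" for r :: real
  have U: "uniform_limit {0..1} (\<lambda>n r. \<Sum>m<n. a m * of_real (r^(2*m))) S sequentially"
    unfolding S_def
  proof (rule Weierstrass_m_test[OF _ sa])
    fix n and r :: real assume "r \<in> {0..1}"
    then have "r^(2*n) \<le> 1" by (simp add: power_le_one)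
    moreover have "0 \<le> r^(2*n)" using \<open>r \<in> {0..1}\<close> by simp
    ultimately have "norm (of_real (r^(2*n)) :: complex) \<le> 1"
      by (simp only: norm_of_real)
    then show "norm (a n * of_real (r^(2*n))) \<le> norm (a n)"
      unfolding norm_mult by (rule mult_left_le) simp
  qed
  have "continuous_on {0..1} S"
    by (rule uniform_limit_theorem[OF _ U]) (auto intro!: always_eventually continuous_intros)
  then have lim: "(S \<longlongrightarrow> S 1) (at_left 1)"
    by (rule continuous_on_Icc_at_leftD) simp
  have S1: "S 1 = (\<Sum>m. a m)" by (simp add: S_def)
  define Q where "Q r = integral {0..2*pi} (\<lambda>t. g (of_real r * cis t) * cnj (h (of_real r * cis t))) / of_real (2*pi)" for r :: real
  have "eventually (\<lambda>r. r \<in> {0<..<1}) (at_left (1::real))"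
    by (rule eventually_at_left_real) simp
  then have ev: "eventually (\<lambda>r. S r = Q r) (at_left (1::real))"
  proof (rule eventually_mono)
    fix r :: real assume "r \<in> {0<..<1}"
    then have "(\<lambda>m. a m * of_real (r^(2*m))) sums Q r"
      unfolding a_def Q_def using parseval[OF g h, of r] by simp
    then show "S r = Q r" unfolding S_def by (rule sums_unique[symmetric])
  qed
  have "(Q \<longlongrightarrow> S 1) (at_left 1)"
    by (rule Lim_transform_eventually[OF lim ev])
  then have "Lim (at_left 1) Q = S 1"
    by (intro tendsto_Lim) (simp_all add: trivial_limit_at_left_real)
  then show ?thesis unfolding h2_inner_def Q_def[symmetric] S1 a_def .
qed


lemma kern_series:
  fixes a :: complex and n :: nat
  assumes a: "norm a < 1"
  obtains d where "\<And>z. z \<in> ball 0 1 \<Longrightarrow> (\<lambda>m. d m * z^m) sums kern n a z"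
    "summable (\<lambda>m. norm (d m)^2)" "\<And>m. m < n \<Longrightarrow> d m = 0"
proof -
  define R where "R = 2 / (1 + norm a)"
  have p: "0 < 1 + norm a" by (metis add_pos_nonneg norm_ge_zero zero_less_one)
  have R1: "1 < R" using a p by (simp add: R_def less_divide_eq)
  have "norm a * R = (2 * norm a) / (1 + norm a)" by (simp add: R_def)
  also have "\<dots> < 1" using a p by (simp add: divide_less_eq)
  finally have aR: "norm a * R < 1" .
  define q where "q z = of_nat (fact n) / (1 - cnj a * z)^(n+1)" for z
  have nz: "1 - cnj a * z \<noteq> 0" if "z \<in> ball 0 R" for z
  proof
    assume "1 - cnj a * z = 0"
    then have "cnj a * z = 1" by simp
    then have "norm a * norm z = 1" by (metis complex_mod_cnj norm_mult norm_one)
    moreover have "norm a * norm z \<le> norm a * R" using that by (intro mult_left_mono) auto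
    ultimately show False using aR by simp
  qed
  have qh: "q holomorphic_on ball 0 R"
    unfolding q_def using nz by (intro holomorphic_intros) auto
  define b where "b j = (deriv ^^ j) q 0 / fact j" for j
  have bs: "(\<lambda>j. b j * z^j) sums q z" if "z \<in> ball 0 R" for z
    using holomorphic_power_series[OF qh that] by (simp add: b_def)
  define d where "d m = (if m < n then 0 else b (m - n))" for m
  have ds: "(\<lambda>m. d m * z^m) sums kern n a z" if "z \<in> ball 0 R" for z
  proof -
    have "(\<lambda>j. z^n * (b j * z^j)) sums (z^n * q z)" by (rule sums_mult[OF bs[OF that]])
    moreover have "z^n * (b j * z^j) = d (j + n) * z^(j+n)" for j
      by (simp add: d_def power_add)
    moreover have "z^n * q z = kern n a z" by (simp add: q_def kern_def)
    ultimately have "(\<lambda>j. d (j + n) * z^(j+n)) sums (kern n a z)" by simp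
    then have "(\<lambda>m. d m * z^m) sums (kern n a z + (\<Sum>i<n. d i * z^i))"
      by (subst (asm) sums_iff_shift)
    moreover have "(\<Sum>i<n. d i * z^i) = 0" by (simp add: d_def)
    ultimately show ?thesis by simp
  qed
  define s where "s = (1 + R) / 2"
  have "norm (of_real s :: complex) < R" unfolding norm_of_real using R1 by (simp add: s_def)
  then have "of_real s \<in> ball (0::complex) R" by simp
  then have "summable (\<lambda>m. d m * (of_real s)^m)" by (rule sums_summable[OF ds])
  moreover have "norm (1::complex) < norm (of_real s :: complex)" unfolding norm_of_real using R1 by (simp add: s_def)
  ultimately have "summable (\<lambda>m. norm (d m * 1^m))" by (rule powser_insidea)
  then have sn: "summable (\<lambda>m. norm (d m))" by simp
  then have "(\<lambda>m. norm (d m)) \<longlonglongrightarrow> 0" by (rule summable_LIMSEQ_zero)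
  then have "eventually (\<lambda>m. norm (d m) < 1) sequentially" by (rule order_tendstoD) simp
  then have "eventually (\<lambda>m. norm (norm (d m)^2) \<le> norm (d m)) sequentially"
  proof (rule eventually_mono)
    fix m assume "norm (d m) < 1"
    then have "norm (d m) * norm (d m) \<le> 1 * norm (d m)" by (intro mult_right_mono) auto
    then show "norm (norm (d m)^2) \<le> norm (d m)" by (simp add: power2_eq_square)
  qed
  then have "summable (\<lambda>m. norm (d m)^2)" using sn by (rule summable_comparison_test_ev)
  moreover have "z \<in> ball 0 1 \<Longrightarrow> (\<lambda>m. d m * z^m) sums kern n a z" for z
    using R1 by (intro ds) auto
  moreover have "m < n \<Longrightarrow> d m = 0" for m by (simp add: d_def)
  ultimately show ?thesis using that by blast
qed


lemma H2_coeffs: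
  assumes "in_H2 f"
  obtains c where "\<And>z. z \<in> ball 0 1 \<Longrightarrow> (\<lambda>k. c k * z^k) sums f z"
    "summable (\<lambda>k. norm (c k)^2)"
proof -
  from assms obtain B where fh: "f holomorphic_on ball 0 1"
    and B: "\<And>r. r \<in> {0<..<1} \<Longrightarrow>
        integral {0..2*pi} (\<lambda>t. (cmod (f (of_real r * cis t)))\<^sup>2) / (2*pi) \<le> B"
    unfolding in_H2_def by blast
  define c where "c k = (deriv ^^ k) f 0 / fact k" for k
  have cs: "(\<lambda>k. c k * z^k) sums f z" if "z \<in> ball 0 1" for z
    using holomorphic_power_series[OF fh that] by (simp add: c_def)
  have fc: "continuous_on (ball 0 1) f" using fh by (rule holomorphic_on_imp_continuous_on)
  have part: "(\<Sum>m<N. norm (c m)^2 * r^(2*m)) \<le> B" if r: "r \<in> {0<..<1}" for r N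
  proof -
    define Ir where "Ir = integral {0..2*pi} (\<lambda>t. (cmod (f (of_real r * cis t)))\<^sup>2)"
    have zn: "norm (of_real r * cis t) < 1" for t using r by (simp add: norm_mult)
    then have zb: "of_real r * cis t \<in> ball 0 1" for t by simp
    have cont: "continuous_on {0..2*pi} (\<lambda>t. f (of_real r * cis t))"
      by (rule continuous_on_compose2[OF fc]) (auto intro!: continuous_intros simp: zn)
    have "(\<lambda>t. (cmod (f (of_real r * cis t)))\<^sup>2) integrable_on {0..2*pi}"
      by (intro integrable_continuous_real continuous_intros cont)
    then have "((\<lambda>t. (cmod (f (of_real r * cis t)))\<^sup>2) has_integral Ir) {0..2*pi}"
      unfolding Ir_def by (rule integrable_integral)
    then have "((\<lambda>t. of_real ((cmod (f (of_real r * cis t)))\<^sup>2) :: complex) has_integral (of_real Ir :: complex)) {0..2*pi}"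
      by (rule has_integral_of_real)
    moreover have "(\<lambda>t. of_real ((cmod (f (of_real r * cis t)))\<^sup>2) :: complex) = (\<lambda>t. f (of_real r * cis t) * cnj (f (of_real r * cis t)))"
      by (rule ext) (rule complex_norm_square)
    ultimately have "((\<lambda>t. f (of_real r * cis t) * cnj (f (of_real r * cis t))) has_integral (of_real Ir :: complex)) {0..2*pi}"
      by simp
    then have ii: "integral {0..2*pi} (\<lambda>t. f (of_real r * cis t) * cnj (f (of_real r * cis t))) = of_real Ir"
      by (rule integral_unique)
    have "(\<lambda>m. c m * cnj (c m) * of_real (r ^ (2*m))) sums (of_real Ir / of_real (2*pi))"
      using parseval[OF cs cs, of r] r unfolding ii by auto
    moreover have "(\<lambda>m. c m * cnj (c m) * of_real (r ^ (2*m))) = (\<lambda>m. of_real (norm (c m)^2 * r^(2*m)))"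
      by (rule ext) (simp only: of_real_mult complex_norm_square)
    moreover have "of_real Ir / of_real (2*pi) = (of_real (Ir / (2*pi)) :: complex)"
      by (simp only: of_real_divide)
    ultimately have "(\<lambda>m. of_real (norm (c m)^2 * r^(2*m))) sums (of_real (Ir / (2*pi)) :: complex)"
      by (simp only:)
    then have S: "(\<lambda>m. norm (c m)^2 * r^(2*m)) sums (Ir / (2*pi))"
      by (simp only: sums_of_real_iff)
    have "(\<Sum>m<N. norm (c m)^2 * r^(2*m)) \<le> (\<Sum>m. norm (c m)^2 * r^(2*m))"
      by (rule sum_le_suminf) (use S r in \<open>auto simp: sums_summable\<close>)
    also have "\<dots> = Ir / (2*pi)" using S by (rule sums_unique[symmetric])
    also have "\<dots> \<le> B" using B[OF r] by (simp add: Ir_def)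
    finally show ?thesis .
  qed
  have "(\<Sum>m<N. norm (c m)^2 * 1^(2*m)) \<le> B" for N
  proof (rule tendsto_upperbound)
    show "((\<lambda>r. \<Sum>m<N. norm (c m)^2 * r^(2*m)) \<longlongrightarrow> (\<Sum>m<N. norm (c m)^2 * 1^(2*m))) (at_left (1::real))"
      by (intro tendsto_intros)
    show "eventually (\<lambda>r. (\<Sum>m<N. norm (c m)^2 * r^(2*m)) \<le> B) (at_left (1::real))"
      by (rule eventually_mono[OF eventually_at_left_real[of 0 1]]) (auto intro: part)
  qed (simp_all add: trivial_limit_at_left_real)
  then have "(\<Sum>m<N. norm (c m)^2) \<le> B" for N by simp
  then have "summable (\<lambda>k. norm (c k)^2)"
    by (intro summableI_nonneg_bounded) auto
  with cs that show ?thesis by blast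
qed


theorem lemma2:
  assumes "in_H2 f"
  shows "\<forall>\<epsilon>>0. \<exists>N::nat. \<forall>n>N. \<forall>a\<in>ball (0::complex) 1. cmod (h2_inner f (ekern n a)) < \<epsilon>"
proof (intro allI impI)
  fix \<epsilon> :: real assume ep: "\<epsilon> > 0"
  obtain c where cs: "\<And>z. z \<in> ball 0 1 \<Longrightarrow> (\<lambda>k. c k * z^k) sums f z"
    and sc: "summable (\<lambda>k. norm (c k)^2)"
    using H2_coeffs[OF assms] by blast
  have "0 < \<epsilon>^2" using ep by simp
  from suminf_exist_split[OF this sc] obtain N where
    N: "\<And>n. n \<ge> N \<Longrightarrow> norm (\<Sum>i. norm (c (i + n))^2) < \<epsilon>^2" by blast
  show "\<exists>N::nat. \<forall>n>N. \<forall>a\<in>ball (0::complex) 1. cmod (h2_inner f (ekern n a)) < \<epsilon>"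
  proof (intro exI allI impI ballI)
    fix n a assume nN: "N < n" and a: "a \<in> ball (0::complex) 1"
    then have "norm a < 1" by simp
    from kern_series[OF this, of n] obtain d where
      ds: "\<And>z. z \<in> ball 0 1 \<Longrightarrow> (\<lambda>m. d m * z^m) sums kern n a z"
      and sd: "summable (\<lambda>m. norm (d m)^2)" and d0: "\<And>m. m < n \<Longrightarrow> d m = 0"
      by blast
    define Sk where "Sk = (\<Sum>m. norm (d m)^2)"
    have Sk0: "0 \<le> Sk" unfolding Sk_def by (intro suminf_nonneg sd) simp
    have "h2_inner (kern n a) (kern n a) = (\<Sum>m. d m * cnj (d m))"
      by (rule inner_lim[OF ds ds sd sd])
    also have "\<dots> = (\<Sum>m. of_real (norm (d m)^2))"
      by (simp only: complex_norm_square)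
    also have "\<dots> = of_real Sk" unfolding Sk_def by (rule suminf_of_real[symmetric, OF sd])
    finally have "h2_norm (kern n a) = sqrt Sk" by (simp add: h2_norm_def)
    then have ek: "ekern n a = (\<lambda>z. kern n a z / of_real (sqrt Sk))"
      by (simp add: ekern_def fun_eq_iff)
    define D where "D m = d m / of_real (sqrt Sk)" for m
    have Ds: "(\<lambda>m. D m * z^m) sums ekern n a z" if "z \<in> ball 0 1" for z
    proof -
      have "(\<lambda>m. d m * z^m / of_real (sqrt Sk)) sums (kern n a z / of_real (sqrt Sk))"
        by (rule sums_divide[OF ds[OF that]])
      then show ?thesis by (simp add: ek D_def)
    qed
    have nD: "norm (D m)^2 = norm (d m)^2 / Sk" for m
      using Sk0 by (simp add: D_def norm_divide power_divide)
    have sD: "summable (\<lambda>m. norm (D m)^2)" unfolding nD by (rule summable_divide[OF sd])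
    have Y: "(\<Sum>m. norm (D m)^2) \<le> 1"
    proof -
      have "(\<Sum>m. norm (D m)^2) = Sk / Sk" unfolding nD Sk_def by (rule suminf_divide[OF sd])
      also have "\<dots> \<le> 1" by simp
      finally show ?thesis .
    qed
    have inner: "h2_inner f (ekern n a) = (\<Sum>m. c m * cnj (D m))"
      by (rule inner_lim[OF cs Ds sc sD])
    define x where "x m = (if n \<le> m then norm (c m) else 0)" for m
    have xy: "norm (c m * cnj (D m)) = x m * norm (D m)" for m
    proof (cases "n \<le> m")
      case True then show ?thesis by (simp add: x_def norm_mult)
    next
      case False then show ?thesis by (simp add: x_def D_def d0)
    qed
    have amgm: "x m * norm (D m) \<le> (x m^2 / \<epsilon> + \<epsilon> * norm (D m)^2) / 2" for m
    proof -
      have "0 \<le> (x m - \<epsilon> * norm (D m))^2" by simp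
      then have "2 * \<epsilon> * (x m * norm (D m)) \<le> x m^2 + \<epsilon>^2 * norm (D m)^2"
        by (simp add: power2_eq_square algebra_simps)
      then show ?thesis using ep by (simp add: field_simps power2_eq_square)
    qed
    have sx: "summable (\<lambda>m. x m^2)"
      by (rule summable_comparison_test[OF _ sc]) (auto simp: x_def)
    have sR: "summable (\<lambda>m. (x m^2 / \<epsilon> + \<epsilon> * norm (D m)^2) / 2)"
      by (intro summable_divide summable_add summable_mult sx sD)
    have xnn: "0 \<le> x m" for m by (simp add: x_def)
    have bnd: "norm (norm (c m * cnj (D m))) \<le> (x m^2 / \<epsilon> + \<epsilon> * norm (D m)^2) / 2" for m
      using amgm[of m] xy[of m] xnn[of m] by simp
    have sn: "summable (\<lambda>m. norm (c m * cnj (D m)))"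
      by (rule summable_comparison_test'[OF sR bnd])
    have X: "(\<Sum>m. x m^2) < \<epsilon>^2"
    proof -
      have "(\<Sum>m. x m^2) = (\<Sum>i. x (i + n)^2) + (\<Sum>i<n. x i^2)"
        by (rule suminf_split_initial_segment[OF sx])
      also have "\<dots> = (\<Sum>i. norm (c (i + n))^2)" by (simp add: x_def)
      also have "\<dots> < \<epsilon>^2" using N[of n] nN by simp
      finally show ?thesis .
    qed
    have "cmod (h2_inner f (ekern n a)) \<le> (\<Sum>m. norm (c m * cnj (D m)))"
      unfolding inner by (rule summable_norm[OF sn])
    also have "\<dots> \<le> (\<Sum>m. (x m^2 / \<epsilon> + \<epsilon> * norm (D m)^2) / 2)"
      by (rule suminf_le[OF _ sn sR]) (use bnd in simp)
    also have "\<dots> = ((\<Sum>m. x m^2) / \<epsilon> + \<epsilon> * (\<Sum>m. norm (D m)^2)) / 2"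
    proof -
      have s1: "(\<lambda>m. x m^2 / \<epsilon>) sums ((\<Sum>m. x m^2) / \<epsilon>)"
        by (rule sums_divide[OF summable_sums[OF sx]])
      have s2: "(\<lambda>m. \<epsilon> * norm (D m)^2) sums (\<epsilon> * (\<Sum>m. norm (D m)^2))"
        by (rule sums_mult[OF summable_sums[OF sD]])
      have "(\<lambda>m. (x m^2 / \<epsilon> + \<epsilon> * norm (D m)^2) / 2) sums (((\<Sum>m. x m^2) / \<epsilon> + \<epsilon> * (\<Sum>m. norm (D m)^2)) / 2)"
        by (rule sums_divide[OF sums_add[OF s1 s2]])
      then show ?thesis by (rule sums_unique[symmetric])
    qed
    also have "\<dots> < \<epsilon>"
    proof -
      have "(\<Sum>m. x m^2) / \<epsilon> < \<epsilon>" using X ep by (simp add: divide_less_eq power2_eq_square)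
      moreover have "\<epsilon> * (\<Sum>m. norm (D m)^2) \<le> \<epsilon>" using Y ep by (simp add: mult_left_le)
      ultimately show ?thesis by simp
    qed
    finally show "cmod (h2_inner f (ekern n a)) < \<epsilon>" .
  qed
qed

end
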